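(* If $T$ is a tree of order $n\geq 3$ with maximum degree $\Delta(T)$, then $px_k(T)=\Delta(T)$ for each integer $k$ with $3\leq k\leq n$.
   Context: All graphs are finite, simple, undirected and connected. An edge-coloring of a graph assigns a color to each edge (adjacent edges may receive the same color). A tree in an edge-colored graph is proper if any two adjacent edges of the tree receive different colors. For $S\subseteq V(G)$, an $S$-tree is a subgraph of $G$ that is a tree containing all vertices of $S$. For a connected graph $G$ of order $n$ and an integer $k$ with $2\le k\le n$, an edge-coloring of $G$ is a $k$-proper coloring if for every set $S$ of $k$ vertices of $G$ there exists a proper $S$-tree in $G$. The $k$-proper index $px_k(G)$ is the minimum number of colors used in a $k$-proper coloring of $G$. *)

theory Defs
  imports Main
begin

definition simple_graph :: "'a set \<Rightarrow> 'a set set \<Rightarrow> bool" where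
  "simple_graph V E \<longleftrightarrow> finite V \<and>
     (\<forall>e\<in>E. \<exists>u v. e = {u, v} \<and> u \<noteq> v \<and> u \<in> V \<and> v \<in> V)"

definition adj_rel :: "'a set set \<Rightarrow> ('a \<times> 'a) set" where
  "adj_rel E = {(u, v). {u, v} \<in> E}"

definition connected_graph :: "'a set \<Rightarrow> 'a set set \<Rightarrow> bool" where
  "connected_graph V E \<longleftrightarrow> V \<noteq> {} \<and> (\<forall>u\<in>V. \<forall>v\<in>V. (u, v) \<in> (adj_rel E)\<^sup>*)"

definition is_cycle :: "'a set set \<Rightarrow> 'a list \<Rightarrow> bool" where
  "is_cycle E vs \<longleftrightarrow> length vs \<ge> 3 \<and> distinct vs \<and>
     (\<forall>i. Suc i < length vs \<longrightarrow> {vs ! i, vs ! Suc i} \<in> E) \<and>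
     {last vs, hd vs} \<in> E"

definition acyclic_graph :: "'a set set \<Rightarrow> bool" where
  "acyclic_graph E \<longleftrightarrow> (\<nexists>vs. is_cycle E vs)"

definition is_tree :: "'a set \<Rightarrow> 'a set set \<Rightarrow> bool" where
  "is_tree V E \<longleftrightarrow> simple_graph V E \<and> connected_graph V E \<and> acyclic_graph E"

definition degree :: "'a set set \<Rightarrow> 'a \<Rightarrow> nat" where
  "degree E v = card {e \<in> E. v \<in> e}"

definition max_degree :: "'a set \<Rightarrow> 'a set set \<Rightarrow> nat" where
  "max_degree V E = Max (degree E ` V)"

text \<open>Edge-colorings are maps from edges to colours (natural numbers); only
  the values on the edges of the graph matter.\<close>

definition proper_edges :: "('a set \<Rightarrow> nat) \<Rightarrow> 'a set set \<Rightarrow> bool" where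
  "proper_edges c F \<longleftrightarrow>
     (\<forall>e1\<in>F. \<forall>e2\<in>F. e1 \<noteq> e2 \<and> e1 \<inter> e2 \<noteq> {} \<longrightarrow> c e1 \<noteq> c e2)"

definition has_proper_S_tree ::
  "'a set \<Rightarrow> 'a set set \<Rightarrow> ('a set \<Rightarrow> nat) \<Rightarrow> 'a set \<Rightarrow> bool" where
  "has_proper_S_tree V E c S \<longleftrightarrow>
     (\<exists>V' E'. V' \<subseteq> V \<and> E' \<subseteq> E \<and> S \<subseteq> V' \<and> is_tree V' E' \<and> proper_edges c E')"

definition k_proper_coloring ::
  "'a set \<Rightarrow> 'a set set \<Rightarrow> nat \<Rightarrow> ('a set \<Rightarrow> nat) \<Rightarrow> bool" where
  "k_proper_coloring V E k c \<longleftrightarrow>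
     (\<forall>S. S \<subseteq> V \<and> card S = k \<longrightarrow> has_proper_S_tree V E c S)"

definition proper_index :: "nat \<Rightarrow> 'a set \<Rightarrow> 'a set set \<Rightarrow> nat" where
  "proper_index k V E =
     (LEAST m. \<exists>c. k_proper_coloring V E k c \<and> card (c ` E) = m)"

end

theory Submission
  imports Defs "HOL-Library.Transitive_Closure_Table"
begin

lemma path_props:
  "rtrancl_path r x xs y \<Longrightarrow> last (x # xs) = y \<and>
     (\<forall>i. Suc i < length (x # xs) \<longrightarrow> r ((x # xs) ! i) ((x # xs) ! Suc i))"
proof (induction rule: rtrancl_path.induct)
  case (base x)
  then show ?case by simp
next
  case (step x y ys z)
  have "last (x # y # ys) = z" using step by simp
  moreover have "\<forall>i. Suc i < length (x # y # ys) \<longrightarrow> r ((x # y # ys) ! i) ((x # y # ys) ! Suc i)"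
  proof (intro allI impI)
    fix i assume i: "Suc i < length (x # y # ys)"
    show "r ((x # y # ys) ! i) ((x # y # ys) ! Suc i)"
    proof (cases i)
      case 0 then show ?thesis using step by simp
    next
      case (Suc j) then show ?thesis using step i by auto
    qed
  qed
  ultimately show ?case by simp
qed

lemma key_lemma:
  assumes ac: "acyclic_graph E" and e: "{x, y} \<in> E" and xy: "x \<noteq> y"
  shows "(x, y) \<notin> (adj_rel (E - {{x, y}}))\<^sup>*"
proof
  assume "(x, y) \<in> (adj_rel (E - {{x, y}}))\<^sup>*"
  then have "(\<lambda>a b. {a, b} \<in> E - {{x, y}})\<^sup>*\<^sup>* x y"
    by (simp add: rtranclp_rtrancl_eq adj_rel_def)
  then obtain xs0 where "rtrancl_path (\<lambda>a b. {a, b} \<in> E - {{x, y}}) x xs0 y"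
    by (auto simp: rtranclp_eq_rtrancl_path)
  then obtain xs where p: "rtrancl_path (\<lambda>a b. {a, b} \<in> E - {{x, y}}) x xs y"
    and d: "distinct (x # xs)"
    by (rule rtrancl_path_distinct)
  from path_props[OF p] have l: "last (x # xs) = y"
    and st: "\<forall>i. Suc i < length (x # xs) \<longrightarrow> {(x # xs) ! i, (x # xs) ! Suc i} \<in> E - {{x, y}}"
    by auto
  have "xs \<noteq> []" using l xy by auto
  then obtain z zs where xs: "xs = z # zs" by (cases xs) auto
  have "zs \<noteq> []"
  proof
    assume "zs = []"
    then have "z = y" using l xs by simp
    then show False using st[rule_format, of 0] xs by simp
  qed
  then have len: "length (x # xs) \<ge> 3" using xs by (cases zs) auto
  have "is_cycle E (x # xs)"
    unfolding is_cycle_def using len d st l e by (auto simp: insert_commute)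
  then show False using ac unfolding acyclic_graph_def by blast
qed

lemma cycle_mono: "is_cycle F vs \<Longrightarrow> F \<subseteq> E \<Longrightarrow> is_cycle E vs"
  unfolding is_cycle_def by (meson subsetD)

lemma acyclic_mono: "acyclic_graph E \<Longrightarrow> F \<subseteq> E \<Longrightarrow> acyclic_graph F"
  unfolding acyclic_graph_def using cycle_mono by blast

lemma free_color:
  assumes fin: "finite F" and deg: "Suc (degree F u) \<le> D"
  shows "\<exists>a<D. \<forall>f\<in>F. u \<in> f \<longrightarrow> c f \<noteq> a"
proof (rule ccontr)
  assume H: "\<not> ?thesis"
  let ?U = "c ` {f\<in>F. u \<in> f}"
  have fU: "finite ?U" using fin by simp
  have "card ?U \<le> degree F u" unfolding degree_def
    using fin by (intro card_image_le) auto
  then have lt: "card ?U < card {..<D}" using deg by simp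
  have "{..<D} \<subseteq> ?U" using H by blast
  then have "card {..<D} \<le> card ?U" using fU by (rule card_mono[rotated])
  then show False using lt by simp
qed

lemma color_forest:
  assumes "finite F"
  shows "acyclic_graph F \<Longrightarrow> (\<forall>f\<in>F. \<exists>u v. f = {u, v} \<and> u \<noteq> v) \<Longrightarrow> (\<forall>x. degree F x \<le> D)
    \<Longrightarrow> \<exists>c. proper_edges c F \<and> c ` F \<subseteq> {..<D}"
  using assms
proof (induction F rule: finite_induct)
  case empty
  then show ?case by (simp add: proper_edges_def)
next
  case (insert e F)
  have acF: "acyclic_graph F" using insert.prems acyclic_mono by blast
  have degeq: "degree (insert e F) x = (if x \<in> e then Suc (degree F x) else degree F x)" for x
  proof -
    have "{f \<in> insert e F. x \<in> f} = (if x \<in> e then insert e {f\<in>F. x \<in> f} else {f\<in>F. x \<in> f})"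
      by auto
    then show ?thesis unfolding degree_def using insert.hyps by auto
  qed
  have degF: "\<forall>x. degree F x \<le> D"
    using insert.prems(3) degeq by (metis Suc_leD)
  obtain c where cp: "proper_edges c F" and cr: "c ` F \<subseteq> {..<D}"
    using insert.IH[OF acF _ degF] insert.prems(2) by blast
  obtain u v where e: "e = {u, v}" and uv: "u \<noteq> v" using insert.prems(2) by blast
  have du: "Suc (degree F u) \<le> D" using insert.prems(3) degeq[of u] e by (metis insertI1)
  have dv: "Suc (degree F v) \<le> D" using insert.prems(3) degeq[of v] e by (metis insertI1 insert_commute)
  obtain a where a: "a < D" "\<forall>f\<in>F. u \<in> f \<longrightarrow> c f \<noteq> a" using free_color[OF insert.hyps(1) du] by blast
  obtain b where b: "b < D" "\<forall>f\<in>F. v \<in> f \<longrightarrow> c f \<noteq> b" using free_color[OF insert.hyps(1) dv] by blast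
  define C where "C = {x. (v, x) \<in> (adj_rel F)\<^sup>*}"
  have FE: "F = insert e F - {{v, u}}" using insert.hyps e by (auto simp: insert_commute)
  have uC: "u \<notin> C"
    using key_lemma[OF insert.prems(1), of v u] e uv FE unfolding C_def by (auto simp: insert_commute)
  have vC: "v \<in> C" unfolding C_def by simp
  have closed: "f \<subseteq> C" if "f \<in> F" "f \<inter> C \<noteq> {}" for f
  proof -
    have "\<exists>p q. f = {p, q} \<and> p \<noteq> q" using insert.prems(2) that(1) by simp
    then obtain p q where f: "f = {p, q}" by blast
    have "(p, q) \<in> adj_rel F" "(q, p) \<in> adj_rel F" using that(1) f by (auto simp: adj_rel_def insert_commute)
    then show ?thesis using that(2) f unfolding C_def
      by (auto intro: rtrancl_into_rtrancl)
  qed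
  define sw where "sw x = (if x = a then b else if x = b then a else x)" for x
  have swinj: "sw x = sw y \<Longrightarrow> x = y" for x y unfolding sw_def by (auto split: if_splits)
  define c' where "c' f = (if f = e then a else if f \<inter> C \<noteq> {} then sw (c f) else c f)" for f
  have "proper_edges c' (insert e F)"
    unfolding proper_edges_def
  proof (intro ballI impI)
    fix e1 e2 assume e1: "e1 \<in> insert e F" and e2: "e2 \<in> insert e F" and ne: "e1 \<noteq> e2 \<and> e1 \<inter> e2 \<noteq> {}"
    show "c' e1 \<noteq> c' e2"
    proof (cases "e1 = e")
      case True
      then have e2F: "e2 \<in> F" "e2 \<noteq> e" using e2 ne by auto
      have "u \<in> e2 \<or> v \<in> e2" using ne True e by auto
      then show ?thesis
      proof
        assume "u \<in> e2"
        then have "e2 \<inter> C = {}" using closed[OF e2F(1)] uC by blast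
        then show ?thesis using True e2F a(2) \<open>u \<in> e2\<close> unfolding c'_def by auto
      next
        assume "v \<in> e2"
        then have "e2 \<inter> C \<noteq> {}" using vC by blast
        then show ?thesis using True e2F b(2) \<open>v \<in> e2\<close> unfolding c'_def sw_def by auto
      qed
    next
      case False
      note F1 = this
      show ?thesis
      proof (cases "e2 = e")
        case True
        then have e1F: "e1 \<in> F" using e1 F1 by auto
        have "u \<in> e1 \<or> v \<in> e1" using ne True e by auto
        then show ?thesis
        proof
          assume "u \<in> e1"
          then have "e1 \<inter> C = {}" using closed[OF e1F] uC by blast
          then show ?thesis using True F1 e1F a(2) \<open>u \<in> e1\<close> unfolding c'_def by auto
        next
          assume "v \<in> e1"
          then have "e1 \<inter> C \<noteq> {}" using vC by blast
          then show ?thesis using True F1 e1F b(2) \<open>v \<in> e1\<close> unfolding c'_def sw_def by auto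
        qed
      next
        case False
        then have e12: "e1 \<in> F" "e2 \<in> F" using e1 e2 F1 by auto
        have cc: "c e1 \<noteq> c e2" using cp e12 ne unfolding proper_edges_def by blast
        have "(e1 \<inter> C \<noteq> {}) = (e2 \<inter> C \<noteq> {})"
          using closed[OF e12(1)] closed[OF e12(2)] ne by blast
        then show ?thesis using cc F1 False swinj unfolding c'_def by auto
      qed
    qed
  qed
  moreover have "c' ` insert e F \<subseteq> {..<D}"
    using cr a(1) b(1) unfolding c'_def sw_def by auto
  ultimately show ?case by blast
qed

lemma exists_superset_card:
  assumes "finite V" "A \<subseteq> V" "card A \<le> k" "k \<le> card V"
  shows "\<exists>S. A \<subseteq> S \<and> S \<subseteq> V \<and> card S = k"
proof -
  have "k - card A \<le> card (V - A)" using assms by (simp add: card_Diff_subset finite_subset)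
  then obtain T where T: "T \<subseteq> V - A" "card T = k - card A" "finite T"
    by (rule obtain_subset_with_card_n)
  have fA: "finite A" using assms finite_subset by blast
  have "card (A \<union> T) = card A + card T" using T fA by (intro card_Un_disjoint) auto
  then show ?thesis using T assms by (intro exI[of _ "A \<union> T"]) auto
qed

lemma lower_bound:
  assumes tree: "is_tree V E" and finE: "finite E" and k2: "2 \<le> k" and kV: "k \<le> card V"
    and vV: "v \<in> V" and kp: "k_proper_coloring V E k c"
  shows "degree E v \<le> card (c ` E)"
proof -
  have sg: "simple_graph V E" and ac: "acyclic_graph E" using tree unfolding is_tree_def by auto
  have finV: "finite V" using sg unfolding simple_graph_def by auto
  let ?Ev = "{e\<in>E. v \<in> e}"
  have nb: "\<exists>a. e = {v, a} \<and> a \<noteq> v \<and> a \<in> V" if "e \<in> ?Ev" for e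
  proof -
    have "\<exists>p q. e = {p, q} \<and> p \<noteq> q \<and> p \<in> V \<and> q \<in> V" using sg that unfolding simple_graph_def by simp
    then obtain p q where "e = {p, q}" "p \<noteq> q" "p \<in> V" "q \<in> V" by blast
    then show ?thesis using that by (auto simp: insert_commute)
  qed
  have inE: "e \<in> E'" if e: "e \<in> E" "e = {v, a}" "a \<noteq> v" and b: "{v, b} \<in> E" "{v, b} \<noteq> e"
     and E': "E' \<subseteq> E" "(a, b) \<in> (adj_rel E')\<^sup>*" for e a b E'
  proof (rule ccontr)
    assume "e \<notin> E'"
    then have "E' \<subseteq> E - {{a, v}}" using E' e by (auto simp: insert_commute)
    then have "adj_rel E' \<subseteq> adj_rel (E - {{a, v}})" unfolding adj_rel_def by auto
    then have 1: "(a, b) \<in> (adj_rel (E - {{a, v}}))\<^sup>*" using E'(2) rtrancl_mono by blast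
    have "(b, v) \<in> adj_rel (E - {{a, v}})" using b e unfolding adj_rel_def by (auto simp: insert_commute)
    then have "(a, v) \<in> (adj_rel (E - {{a, v}}))\<^sup>*" by (rule rtrancl_into_rtrancl[OF 1])
    moreover have "{a, v} \<in> E" using e by (simp add: insert_commute)
    ultimately show False using key_lemma[OF ac, of a v] e by simp
  qed
  have inj: "inj_on c ?Ev"
  proof (rule inj_onI)
    fix e1 e2 assume e1: "e1 \<in> ?Ev" and e2: "e2 \<in> ?Ev" and ceq: "c e1 = c e2"
    show "e1 = e2"
    proof (rule ccontr)
      assume ne: "e1 \<noteq> e2"
      obtain a where a: "e1 = {v, a}" "a \<noteq> v" "a \<in> V" using nb[OF e1] by blast
      obtain b where b: "e2 = {v, b}" "b \<noteq> v" "b \<in> V" using nb[OF e2] by blast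
      have ab: "a \<noteq> b" using a b ne by auto
      have "card {a, b} \<le> k" using ab k2 by simp
      then obtain S where S: "{a, b} \<subseteq> S" "S \<subseteq> V" "card S = k"
        using exists_superset_card[OF finV, of "{a, b}" k] a b kV by auto
      then have "has_proper_S_tree V E c S" using kp unfolding k_proper_coloring_def by blast
      then obtain V' E' where VE: "V' \<subseteq> V" "E' \<subseteq> E" "S \<subseteq> V'" "is_tree V' E'" "proper_edges c E'"
        unfolding has_proper_S_tree_def by blast
      have "connected_graph V' E'" using VE(4) unfolding is_tree_def by simp
      then have ab': "(a, b) \<in> (adj_rel E')\<^sup>*" "(b, a) \<in> (adj_rel E')\<^sup>*"
      proof -
        have "a \<in> V'" "b \<in> V'" using S VE(3) by auto
        then show "(a, b) \<in> (adj_rel E')\<^sup>*" "(b, a) \<in> (adj_rel E')\<^sup>*"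
          using \<open>connected_graph V' E'\<close> unfolding connected_graph_def by auto
      qed
      have e1E: "e1 \<in> E" and e2E: "e2 \<in> E" using e1 e2 by auto
      have v12: "v \<in> e1 \<inter> e2" using e1 e2 by auto
      have "e1 \<in> E'"
        by (rule inE[OF e1E a(1) a(2) _ _ VE(2) ab'(1)]) (use e2E b(1) ne in auto)
      moreover have "e2 \<in> E'"
        by (rule inE[OF e2E b(1) b(2) _ _ VE(2) ab'(2)]) (use e1E a(1) ne in auto)
      ultimately have "c e1 \<noteq> c e2" using VE(5) ne v12 unfolding proper_edges_def by blast
      then show False using ceq by simp
    qed
  qed
  have "degree E v = card (c ` ?Ev)" unfolding degree_def using card_image[OF inj] by simp
  also have "\<dots> \<le> card (c ` E)" using finE by (intro card_mono) auto
  finally show ?thesis .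
qed

theorem mainTheorem9:
  fixes V :: "'a set" and E :: "'a set set" and k :: nat
  assumes "is_tree V E"
    and "card V \<ge> 3"
    and "3 \<le> k" and "k \<le> card V"
  shows "proper_index k V E = max_degree V E"
proof -
  have sg: "simple_graph V E" and ac: "acyclic_graph E" using assms(1) unfolding is_tree_def by auto
  have finV: "finite V" using sg unfolding simple_graph_def by auto
  have Ered: "\<forall>e\<in>E. \<exists>u v. e = {u, v} \<and> u \<noteq> v" using sg unfolding simple_graph_def by blast
  have "E \<subseteq> Pow V"
  proof
    fix e assume "e \<in> E"
    then obtain u v where "e = {u, v}" "u \<in> V" "v \<in> V" using sg unfolding simple_graph_def by blast
    then show "e \<in> Pow V" by simp
  qed
  then have finE: "finite E" using finV by (meson finite_Pow_iff finite_subset)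
  have Vne: "V \<noteq> {}" using assms(2) by auto
  define D where "D = max_degree V E"
  have degle: "degree E x \<le> D" for x
  proof (cases "x \<in> V")
    case True
    then show ?thesis unfolding D_def max_degree_def using finV by simp
  next
    case False
    then have "{e \<in> E. x \<in> e} = {}" using sg unfolding simple_graph_def by fastforce
    then show ?thesis unfolding degree_def by (metis card.empty le0)
  qed
  have "D \<in> degree E ` V"
    unfolding D_def max_degree_def using Max_in[of "degree E ` V"] finV Vne by auto
  then obtain v where vV: "v \<in> V" and dv: "degree E v = D" by auto
  have low: "D \<le> card (c ` E)" if "k_proper_coloring V E k c" for c
    using lower_bound[OF assms(1) finE _ assms(4) vV that] assms(3) dv by simp
  obtain c0 where c0: "proper_edges c0 E" "c0 ` E \<subseteq> {..<D}"
    using color_forest[OF finE ac Ered] degle by blast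
  have kp0: "k_proper_coloring V E k c0"
    unfolding k_proper_coloring_def has_proper_S_tree_def using assms(1) c0(1) by blast
  have "card (c0 ` E) \<le> D" using card_mono[OF _ c0(2)] by simp
  then have eq: "card (c0 ` E) = D" using low[OF kp0] by simp
  have "(LEAST m. \<exists>c. k_proper_coloring V E k c \<and> card (c ` E) = m) = D"
  proof (rule Least_equality)
    show "\<exists>c. k_proper_coloring V E k c \<and> card (c ` E) = D" using kp0 eq by blast
  next
    fix m assume "\<exists>c. k_proper_coloring V E k c \<and> card (c ` E) = m"
    then show "D \<le> m" using low by blast
  qed
  then show ?thesis unfolding proper_index_def D_def .
qed

end
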